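(* Let $b_1,b_2\in\mathbb{R}$ satisfy $b_1>0$, $3b_1+b_2<0$ and $6b_1+b_2>0$, let $\phi$ be as below, $g(p)=p+\phi(p)$, and set $u_-=1-\alpha_0$, $u_0=1/2$, $u_+=\alpha_0$. Then: (G1) $g(u_+-\delta)+g(u_-+\delta)=2u_0$ for all $\delta$; (G2) $g'(u_0)>1$ and $g'(u_-)=g'(u_+)<1$; (G3) $g''(p)>0$ for $p\in(u_-,u_0)$ and $g''(p)<0$ for $p\in(u_0,u_+)$.
   Context: $\phi(p)=b_1p(1-p)^4+b_2p^2(1-p)^3-b_2p^3(1-p)^2-b_1p^4(1-p)$; $\alpha_0=1/2+\beta_0$ with $\beta_0=\frac{\sqrt{-(b_1-b_2)(3b_1+b_2)}}{2(b_1-b_2)}$, so that $1-\alpha_0<1/2<\alpha_0$ are the roots of $\phi$ in $(0,1)$ other than $1/2$. *)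

theory Defs
  imports "HOL-Analysis.Analysis"
begin

definition phi :: "real \<Rightarrow> real \<Rightarrow> real \<Rightarrow> real" where
  "phi b1 b2 p = b1 * p * (1 - p)^4 + b2 * p^2 * (1 - p)^3 - b2 * p^3 * (1 - p)^2 - b1 * p^4 * (1 - p)"

definition beta0 :: "real \<Rightarrow> real \<Rightarrow> real" where
  "beta0 b1 b2 = sqrt (- (b1 - b2) * (3 * b1 + b2)) / (2 * (b1 - b2))"

definition alpha0 :: "real \<Rightarrow> real \<Rightarrow> real" where
  "alpha0 b1 b2 = 1/2 + beta0 b1 b2"

definition gmap :: "real \<Rightarrow> real \<Rightarrow> real \<Rightarrow> real" where
  "gmap b1 b2 p = p + phi b1 b2 p"

end

theory Submission
  imports Defs
begin

lemma g_poly: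
  "gmap b1 b2 p = p - ((3*b1+b2)/8)*(p-1/2) - ((b1-b2)/2 - (3*b1+b2)/2)*(p-1/2)^3 + 2*(b1-b2)*(p-1/2)^5"
  unfolding gmap_def phi_def by (simp add: field_simps power_def numeral_eq_Suc)

definition g1 :: "real \<Rightarrow> real \<Rightarrow> real \<Rightarrow> real" where
  "g1 b1 b2 p = 1 - ((3*b1+b2)/8) - 3*((b1-b2)/2 - (3*b1+b2)/2)*(p-1/2)^2 + 10*(b1-b2)*(p-1/2)^4"

definition g2 :: "real \<Rightarrow> real \<Rightarrow> real \<Rightarrow> real" where
  "g2 b1 b2 p = - 6*((b1-b2)/2 - (3*b1+b2)/2)*(p-1/2) + 40*(b1-b2)*(p-1/2)^3"

lemma d1: "deriv (gmap b1 b2) = g1 b1 b2"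
proof
  fix p
  have "((gmap b1 b2) has_real_derivative g1 b1 b2 p) (at p)"
    unfolding g_poly[abs_def] g1_def
    by (auto intro!: derivative_eq_intros simp: field_simps)
  then show "deriv (gmap b1 b2) p = g1 b1 b2 p" by (rule DERIV_imp_deriv)
qed

lemma d2: "deriv (g1 b1 b2) = g2 b1 b2"
proof
  fix p
  have "((g1 b1 b2) has_real_derivative g2 b1 b2 p) (at p)"
    unfolding g1_def[abs_def] g2_def
    by (auto intro!: derivative_eq_intros simp: field_simps)
  then show "deriv (g1 b1 b2) p = g2 b1 b2 p" by (rule DERIV_imp_deriv)
qed

theorem mainTheorem8:
  fixes b1 b2 :: real
  assumes "b1 > 0" and "3 * b1 + b2 < 0" and "6 * b1 + b2 > 0"
  defines "g \<equiv> gmap b1 b2"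
    and "um \<equiv> 1 - alpha0 b1 b2" and "u0 \<equiv> (1/2 :: real)" and "up \<equiv> alpha0 b1 b2"
  shows "(\<forall>\<delta>::real. g (up - \<delta>) + g (um + \<delta>) = 2 * u0)
    \<and> (deriv g u0 > 1 \<and> deriv g um = deriv g up \<and> deriv g up < 1)
    \<and> (\<forall>p. um < p \<and> p < u0 \<longrightarrow> deriv (deriv g) p > 0)
    \<and> (\<forall>p. u0 < p \<and> p < up \<longrightarrow> deriv (deriv g) p < 0)"
proof -
  define A where "A = (3*b1+b2)/4"
  define B where "B = b1 - b2"
  define \<beta> where "\<beta> = beta0 b1 b2"
  have A: "A < 0" and B: "B > 0" and AB: "B + 4*A > 0" and AB2: "3*B + 28*A > 0"
    using assms unfolding A_def B_def by (auto simp: field_simps)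
  have rad: "- (b1 - b2) * (3 * b1 + b2) > 0" using assms mult_pos_neg[of "b1-b2" "3*b1+b2"] by linarith
  have bpos: "\<beta> > 0" unfolding \<beta>_def beta0_def using rad B B_def by simp
  have bsq: "\<beta>^2 = -A/B"
  proof -
    have "\<beta>^2 = (- (b1 - b2) * (3 * b1 + b2)) / (2*(b1-b2))^2"
      unfolding \<beta>_def beta0_def using rad by (simp add: power_divide)
    also have "\<dots> = (-B*(4*A))/(4*B^2)" 
    proof -
      have "4*A = 3*b1+b2" by (simp add: A_def)
      then show ?thesis unfolding B_def by (simp add: power2_eq_square algebra_simps)
    qed
    also have "\<dots> = -A/B" using B by (simp add: field_simps power2_eq_square)
    finally show ?thesis .
  qed
  have bsq2: "B*\<beta>^2 = -A" using bsq B by (simp add: field_simps)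
  have up: "up = 1/2 + \<beta>" and um: "um = 1/2 - \<beta>"
    unfolding up_def um_def alpha0_def \<beta>_def by auto
  have G1: "\<forall>\<delta>::real. g (up - \<delta>) + g (um + \<delta>) = 2 * u0"
    unfolding g_def g_poly up um u0_def by (simp add: field_simps power2_eq_square power3_eq_cube numeral_eq_Suc)
  have dg: "deriv g = g1 b1 b2" unfolding g_def by (rule d1)
  have ddg: "deriv (deriv g) = g2 b1 b2" unfolding dg by (rule d2)
  have g1e: "g1 b1 b2 p = 1 - A/2 - 3*(B/2 - 2*A)*(p-1/2)^2 + 10*B*(p-1/2)^4" for p
    unfolding g1_def A_def B_def by (simp add: algebra_simps)
  have g2e: "g2 b1 b2 p = (p-1/2)*(-3*B + 12*A + 40*B*(p-1/2)^2)" for p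
  proof -
    have c: "3*b1+b2 = 4*A" "b1 - b2 = B" by (simp_all add: A_def B_def)
    show ?thesis unfolding g2_def c by (simp add: algebra_simps power2_eq_square power3_eq_cube)
  qed
  have G2a: "deriv g u0 > 1" unfolding dg g1e u0_def using A by simp
  have G2b: "deriv g um = deriv g up" unfolding dg g1e up um by (simp add: power2_eq_square power4_eq_xxxx)
  have e1: "deriv g up = 1 - A/2 - 3*(B/2 - 2*A)*\<beta>^2 + 10*(B*\<beta>^2)*\<beta>^2"
    unfolding dg g1e up by (simp add: power4_eq_xxxx power2_eq_square)
  have e2: "10*(B*\<beta>^2)*\<beta>^2 = -10*A*\<beta>^2" unfolding bsq2 by simp
  have e3: "3*(B/2 - 2*A)*\<beta>^2 = 3/2*(B*\<beta>^2) - 6*A*\<beta>^2" by (simp add: algebra_simps)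
  have dgup: "deriv g up = 1 + A - 4*(A*\<beta>^2)" using e1 e2 e3 bsq2 by linarith
  have "4*\<beta>^2 < 1"
  proof -
    have "4*\<beta>^2 = -4*A/B" using bsq by simp
    also have "\<dots> < 1" using AB B by (simp add: field_simps)
    finally show ?thesis .
  qed
  then have "A*(1 - 4*\<beta>^2) < 0" using A by (simp add: mult_neg_pos)
  then have G2c: "deriv g up < 1" unfolding dgup by (simp add: algebra_simps)
  have key: "-3*B + 12*A + 40*B*(p-1/2)^2 < 0" if "\<bar>p - 1/2\<bar> < \<beta>" for p
  proof -
    have "\<bar>p-1/2\<bar>^2 < \<beta>^2" using that by (intro power_strict_mono) auto
    then have "(p-1/2)^2 < \<beta>^2" by simp
    then have "B*(p-1/2)^2 < B*\<beta>^2" using B by simp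
    then show ?thesis using bsq2 AB2 by linarith
  qed
  have G3: "\<forall>p. um < p \<and> p < u0 \<longrightarrow> deriv (deriv g) p > 0"
  proof (intro allI impI)
    fix p assume h: "um < p \<and> p < u0"
    then have "\<bar>p - 1/2\<bar> < \<beta>" unfolding um u0_def by auto
    from key[OF this] h show "deriv (deriv g) p > 0" unfolding ddg g2e u0_def
      by (simp add: mult_neg_neg)
  qed
  have G4: "\<forall>p. u0 < p \<and> p < up \<longrightarrow> deriv (deriv g) p < 0"
  proof (intro allI impI)
    fix p assume h: "u0 < p \<and> p < up"
    then have "\<bar>p - 1/2\<bar> < \<beta>" unfolding up u0_def by auto
    from key[OF this] h show "deriv (deriv g) p < 0" unfolding ddg g2e u0_def
      by (simp add: mult_pos_neg)
  qed
  show ?thesis using G1 G2a G2b G2c G3 G4 by blast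
qed

end
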